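(* Let $r\ge 2$ and $m$ be integers with $0\le 2m\le r$, and put $n=2r-4m$. Let $\{x_0,\dots,x_r\}$ be the basis of $S^r(\mathbb{C}^2)$ and $\{w_0,\dots,w_n\}$ the basis of $S^n(\mathbb{C}^2)$ described in the context. Let $q_0$ be a bilinear form on $S^r(\mathbb{C}^2)$ such that for all $0\le i,j\le r$, $$0=(i+1)\,q_0(x_{i+1},x_j)+(j+1)\,q_0(x_i,x_{j+1}),\qquad (2r-2i-2j-n)\,q_0(x_i,x_j)=0 .$$ Then there exists a unique $\mathfrak{sl}_2(\mathbb{C})$-equivariant linear map $f:S^r(\mathbb{C}^2)\otimes S^r(\mathbb{C}^2)\to S^n(\mathbb{C}^2)$ whose component along $w_0$ is $q_0$, i.e. $f(u\otimes v)=\sum_{k=0}^n q_k(u,v)\,w_k$ for bilinear forms $q_k$ with $q_0$ the given one. Moreover, $f$ is symmetric if and only if $q_0$ is symmetric.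
   Context: $\mathfrak{sl}_2(\mathbb{C})$ has basis $X=\begin{pmatrix}0&1\\0&0\end{pmatrix}$, $H=\begin{pmatrix}1&0\\0&-1\end{pmatrix}$, $Y=\begin{pmatrix}0&0\\1&0\end{pmatrix}$, acting on the irreducible modules $S^d(\mathbb{C}^2)$ (binary forms of degree $d$). Let $x_0\in S^r(\mathbb{C}^2)$ be a highest weight vector and $x_i=Y^ix_0/i!$ for $0\le i\le r$; then $Yx_i=(i+1)x_{i+1}$, $Xx_i=(r-i+1)x_{i-1}$, $Hx_i=(r-2i)x_i$, with the convention $x_{-1}=x_{r+1}=0$ (and $x_l=0$ for $l\notin[0,r]$). Similarly $w_0\in S^n(\mathbb{C}^2)$ is a highest weight vector and $w_k=Y^kw_0/k!$, $0\le k\le n$. *)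

theory Defs
  imports Complex_Main
begin

text \<open>Model of S^d(C^2): a vector is its coordinate function w.r.t. the basis
  x_0,...,x_d of the context; coordinates beyond d vanish.\<close>

type_synonym vec = "nat \<Rightarrow> complex"

definition Sym :: "nat \<Rightarrow> vec set" where
  "Sym d = {v. \<forall>i>d. v i = 0}"

definition bas :: "nat \<Rightarrow> nat \<Rightarrow> vec" where
  "bas d i = (\<lambda>l. if l = i \<and> i \<le> d then 1 else 0)"

definition vadd :: "vec \<Rightarrow> vec \<Rightarrow> vec" where
  "vadd u v = (\<lambda>l. u l + v l)"

definition vscale :: "complex \<Rightarrow> vec \<Rightarrow> vec" where
  "vscale c v = (\<lambda>l. c * v l)"

text \<open>Action of X, H, Y: Y x_i = (i+1) x_{i+1}, X x_i = (d-i+1) x_{i-1}, H x_i = (d-2i) x_i.\<close>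
definition Yop :: "nat \<Rightarrow> vec \<Rightarrow> vec" where
  "Yop d v = (\<lambda>i. if i \<le> d then of_nat i * v (i - 1) else 0)"

definition Xop :: "nat \<Rightarrow> vec \<Rightarrow> vec" where
  "Xop d v = (\<lambda>i. if i \<le> d then of_nat (d - i) * v (i + 1) else 0)"

definition Hop :: "nat \<Rightarrow> vec \<Rightarrow> vec" where
  "Hop d v = (\<lambda>i. if i \<le> d then (of_int (int d - 2 * int i)) * v i else 0)"

text \<open>Action of the general element [[a,b],[c,-a]] = a H + b X + c Y of sl_2(C).\<close>
definition act :: "nat \<Rightarrow> complex \<Rightarrow> complex \<Rightarrow> complex \<Rightarrow> vec \<Rightarrow> vec" where
  "act d a b c v = (\<lambda>i. a * Hop d v i + b * Xop d v i + c * Yop d v i)"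

definition bilinear_form_on :: "nat \<Rightarrow> (vec \<Rightarrow> vec \<Rightarrow> complex) \<Rightarrow> bool" where
  "bilinear_form_on r q \<longleftrightarrow>
     (\<forall>u\<in>Sym r. \<forall>u'\<in>Sym r. \<forall>v\<in>Sym r. \<forall>c.
        q (vadd u u') v = q u v + q u' v \<and> q (vscale c u) v = c * q u v \<and>
        q v (vadd u u') = q v u + q v u' \<and> q v (vscale c u) = c * q v u)"

text \<open>Linear maps S^r \<otimes> S^r \<rightarrow> S^n, represented (universal property of the tensor
  product) by bilinear maps B with f(u \<otimes> v) = B u v.\<close>
definition bilinear_map_on :: "nat \<Rightarrow> nat \<Rightarrow> (vec \<Rightarrow> vec \<Rightarrow> vec) \<Rightarrow> bool" where
  "bilinear_map_on r n B \<longleftrightarrow>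
     (\<forall>u\<in>Sym r. \<forall>v\<in>Sym r. B u v \<in> Sym n) \<and>
     (\<forall>u\<in>Sym r. \<forall>u'\<in>Sym r. \<forall>v\<in>Sym r. \<forall>c.
        B (vadd u u') v = vadd (B u v) (B u' v) \<and> B (vscale c u) v = vscale c (B u v) \<and>
        B v (vadd u u') = vadd (B v u) (B v u') \<and> B v (vscale c u) = vscale c (B v u))"

definition equivariant :: "nat \<Rightarrow> nat \<Rightarrow> (vec \<Rightarrow> vec \<Rightarrow> vec) \<Rightarrow> bool" where
  "equivariant r n B \<longleftrightarrow>
     (\<forall>a b c. \<forall>u\<in>Sym r. \<forall>v\<in>Sym r.
        vadd (B (act r a b c u) v) (B u (act r a b c v)) = act n a b c (B u v))"

definition symmetric_on :: "nat \<Rightarrow> (vec \<Rightarrow> vec \<Rightarrow> 'a) \<Rightarrow> bool" where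
  "symmetric_on r B \<longleftrightarrow> (\<forall>u\<in>Sym r. \<forall>v\<in>Sym r. B u v = B v u)"

end

theory Submission imports Defs begin

type_synonym mat = "nat \<Rightarrow> nat \<Rightarrow> complex"

definition DX :: "nat \<Rightarrow> mat \<Rightarrow> mat" where
  "DX r M = (\<lambda>i j. (if i = 0 then 0 else (of_nat r - of_nat i + 1) * M (i-1) j)
                   + (if j = 0 then 0 else (of_nat r - of_nat j + 1) * M i (j-1)))"
definition DY :: "mat \<Rightarrow> mat" where
  "DY M = (\<lambda>i j. (of_nat i + 1) * M (i+1) j + (of_nat j + 1) * M i (j+1))"
definition DH :: "nat \<Rightarrow> mat \<Rightarrow> mat" where
  "DH r M = (\<lambda>i j. (2 * of_nat r - 2 * of_nat i - 2 * of_nat j) * M i j)"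
definition smul :: "complex \<Rightarrow> mat \<Rightarrow> mat" where
  "smul c M = (\<lambda>i j. c * M i j)"
definition form :: "nat \<Rightarrow> mat \<Rightarrow> vec \<Rightarrow> vec \<Rightarrow> complex" where
  "form r M u v = (\<Sum>i\<le>r. u i * (\<Sum>j\<le>r. v j * M i j))"
definition suppm :: "nat \<Rightarrow> mat \<Rightarrow> bool" where
  "suppm r M \<longleftrightarrow> (\<forall>i j. (r < i \<or> r < j) \<longrightarrow> M i j = 0)"

lemma comm_YX: "DY (DX r M) = (\<lambda>i j. DX r (DY M) i j + DH r M i j)"
  apply (rule ext, rule ext)
  subgoal for i j
    by (cases i; cases j; simp add: DX_def DY_def DH_def algebra_simps)
  done

lemma comm_HX: "DH r (DX r M) = (\<lambda>i j. DX r (DH r M) i j - 2 * DX r M i j)"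
  apply (rule ext, rule ext)
  subgoal for i j
    by (cases i; cases j; simp add: DX_def DH_def algebra_simps)
  done

lemma DX_smul: "DX r (smul c M) = smul c (DX r M)"
  by (auto simp: DX_def smul_def algebra_simps fun_eq_iff)
lemma DY_smul: "DY (smul c M) = smul c (DY M)"
  by (auto simp: DY_def smul_def algebra_simps fun_eq_iff)
lemma DH_smul: "DH r (smul c M) = smul c (DH r M)"
  by (auto simp: DH_def smul_def algebra_simps fun_eq_iff)
lemma smul_smul: "smul a (smul b M) = smul (a*b) M"
  by (auto simp: smul_def fun_eq_iff)
lemma DX_zero: "DX r (\<lambda>i j. 0) = (\<lambda>i j. 0)"
  by (auto simp: DX_def fun_eq_iff)
lemma DY_zero: "DY (\<lambda>i j. 0) = (\<lambda>i j. 0)"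
  by (auto simp: DY_def fun_eq_iff)

lemma supp_DX: "suppm r M \<Longrightarrow> suppm r (DX r M)"
  unfolding suppm_def DX_def
  apply (intro allI impI)
  subgoal for i j
    apply (cases "i = Suc r"; cases "j = Suc r")
    apply auto
    done
  done

definition E :: "nat \<Rightarrow> mat \<Rightarrow> nat \<Rightarrow> mat" where
  "E r Q k = (DX r ^^ k) Q"

lemma E_0[simp]: "E r Q 0 = Q" and E_Suc: "E r Q (Suc k) = DX r (E r Q k)"
  by (simp_all add: E_def)

lemma E_supp: "suppm r Q \<Longrightarrow> suppm r (E r Q k)"
  by (induction k) (simp_all add: E_Suc supp_DX)

lemma E_low: "\<forall>i j. i + j < k \<longrightarrow> E r Q k i j = 0"
proof (induction k)
  case 0 then show ?case by simp
next
  case (Suc k)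
  show ?case
  proof (intro allI impI)
    fix i j assume "i + j < Suc k"
    have a: "i > 0 \<Longrightarrow> E r Q k (i-1) j = 0" using Suc.IH \<open>i + j < Suc k\<close> by auto
    have b: "j > 0 \<Longrightarrow> E r Q k i (j-1) = 0" using Suc.IH \<open>i + j < Suc k\<close> by auto
    show "E r Q (Suc k) i j = 0"
      using a b by (auto simp: E_Suc DX_def)
  qed
qed

lemma E_big: "suppm r Q \<Longrightarrow> k \<ge> 2*r+1 \<Longrightarrow> E r Q k = (\<lambda>i j. 0)"
proof (intro ext)
  fix i j assume s: "suppm r Q" and k: "k \<ge> 2*r+1"
  show "E r Q k i j = 0"
  proof (cases "r < i \<or> r < j")
    case True then show ?thesis using E_supp[OF s, of k] unfolding suppm_def by blast
  next
    case False then show ?thesis using E_low[of k r Q] k by auto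
  qed
qed

lemma E_H: assumes "DH r Q = smul (of_nat n) Q"
  shows "DH r (E r Q k) = smul (of_nat n - 2 * of_nat k) (E r Q k)"
proof (induction k)
  case 0 then show ?case using assms by simp
next
  case (Suc k)
  have "DH r (E r Q (Suc k)) = (\<lambda>i j. DX r (DH r (E r Q k)) i j - 2 * DX r (E r Q k) i j)"
    by (simp add: E_Suc comm_HX)
  also have "\<dots> = (\<lambda>i j. smul (of_nat n - 2 * of_nat k) (DX r (E r Q k)) i j - 2 * DX r (E r Q k) i j)"
    by (simp only: Suc DX_smul)
  also have "\<dots> = smul (of_nat n - 2 * of_nat (Suc k)) (E r Q (Suc k))"
    by (simp add: E_Suc smul_def fun_eq_iff algebra_simps)
  finally show ?case .
qed

lemma E_Y: assumes "DH r Q = smul (of_nat n) Q" and "DY Q = (\<lambda>i j. 0)"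
  shows "DY (E r Q (Suc k)) = smul ((of_nat k + 1) * (of_nat n - of_nat k)) (E r Q k)"
proof (induction k)
  case 0
  show ?case using assms by (simp add: E_Suc comm_YX DX_zero smul_def)
next
  case (Suc k)
  have "DY (E r Q (Suc (Suc k))) = (\<lambda>i j. DX r (DY (E r Q (Suc k))) i j + DH r (E r Q (Suc k)) i j)"
    by (simp add: E_Suc[of r Q "Suc k"] comm_YX)
  also have "\<dots> = (\<lambda>i j. smul ((of_nat k + 1) * (of_nat n - of_nat k)) (DX r (E r Q k)) i j
       + smul (of_nat n - 2 * of_nat (Suc k)) (E r Q (Suc k)) i j)"
    by (simp only: Suc E_H[OF assms(1)] DX_smul)
  also have "\<dots> = smul ((of_nat (Suc k) + 1) * (of_nat n - of_nat (Suc k))) (E r Q (Suc k))"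
    by (simp add: E_Suc smul_def fun_eq_iff algebra_simps)
  finally show ?case .
qed

lemma E_vanish: assumes "DH r Q = smul (of_nat n) Q" and "DY Q = (\<lambda>i j. 0)" and "suppm r Q"
  shows "k \<ge> n + 1 \<Longrightarrow> E r Q k = (\<lambda>i j. 0)"
proof -
  have "\<forall>k. k \<ge> n+1 \<longrightarrow> k + d \<ge> 2*r+1 \<longrightarrow> E r Q k = (\<lambda>i j. 0)" for d
  proof (induction d)
    case 0 then show ?case using E_big[OF assms(3)] by auto
  next
    case (Suc d)
    show ?case
    proof (intro allI impI)
      fix k assume k: "k \<ge> n+1" "k + Suc d \<ge> 2*r+1"
      have "E r Q (Suc k) = (\<lambda>i j. 0)" using Suc.IH k by auto
      then have "smul ((of_nat k + 1) * (of_nat n - of_nat k)) (E r Q k) = (\<lambda>i j. 0)"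
        using E_Y[OF assms(1,2), of k] DY_zero by simp
      moreover have "(of_nat k + 1) * (of_nat n - of_nat k) \<noteq> (0::complex)"
      proof -
        have "(of_nat k + 1::complex) = of_nat (Suc k)" by simp
        moreover have "(of_nat n - of_nat k::complex) \<noteq> 0" using k(1) by simp
        ultimately show ?thesis by (metis mult_eq_0_iff of_nat_eq_0_iff nat.distinct(1))
      qed
      ultimately show "E r Q k = (\<lambda>i j. 0)"
        by (auto simp: smul_def fun_eq_iff)
    qed
  qed
  from this[of "2*r+1"] show "k \<ge> n + 1 \<Longrightarrow> E r Q k = (\<lambda>i j. 0)" by auto
qed

definition P :: "nat \<Rightarrow> nat \<Rightarrow> complex" where
  "P n k = (\<Prod>t<k. (of_nat n - of_nat t))"

lemma P_Suc: "P n (Suc k) = P n k * (of_nat n - of_nat k)"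
  by (simp add: P_def)

lemma P_nz: "k \<le> n \<Longrightarrow> P n k \<noteq> 0"
  by (auto simp: P_def)

definition T :: "nat \<Rightarrow> nat \<Rightarrow> mat \<Rightarrow> nat \<Rightarrow> mat" where
  "T r n Q k = smul (inverse (P n k)) (E r Q k)"

lemma T_0: "T r n Q 0 = Q"
  by (simp add: T_def P_def smul_def)

lemma smul_zero: "smul c (\<lambda>i j. 0) = (\<lambda>i j. 0)"
  by (simp add: smul_def)

locale setting =
  fixes r n :: nat and Q :: mat
  assumes QH: "DH r Q = smul (of_nat n) Q" and QY: "DY Q = (\<lambda>i j. 0)" and Qs: "suppm r Q"
begin

lemma T_supp: "suppm r (T r n Q k)"
  using E_supp[OF Qs, of k] by (simp add: T_def suppm_def smul_def)

lemma T_X: "k \<le> n \<Longrightarrow> DX r (T r n Q k) = smul (of_nat n - of_nat k) (T r n Q (Suc k))"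
proof (cases "k = n")
  case True
  have "E r Q (Suc k) = (\<lambda>i j. 0)" using E_vanish[OF QH QY Qs, of "Suc k"] True by simp
  then show ?thesis by (simp add: T_def DX_smul E_Suc[symmetric] smul_zero)
next
  case False
  assume "k \<le> n"
  then have k: "k < n" using False by simp
  have nz: "(of_nat n - of_nat k :: complex) \<noteq> 0" using k by simp
  have nz2: "P n k \<noteq> 0" using P_nz k by simp
  have e: "inverse (P n k) = (of_nat n - of_nat k) * inverse (P n (Suc k))"
    using nz nz2 by (simp add: P_Suc)
  have "DX r (T r n Q k) = smul (inverse (P n k)) (E r Q (Suc k))"
    by (simp add: T_def DX_smul E_Suc)
  also have "\<dots> = smul (of_nat n - of_nat k) (T r n Q (Suc k))"
    by (simp add: T_def smul_smul e)
  finally show ?thesis .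
qed

lemma T_Y: "k \<le> n \<Longrightarrow> DY (T r n Q k) = smul (of_nat k) (T r n Q (k - 1))"
proof (cases k)
  case 0
  then show ?thesis by (simp add: T_def DY_smul QY smul_zero) (simp add: smul_def)
next
  case (Suc k')
  assume "k \<le> n"
  then have k: "k' < n" using Suc by simp
  have nz: "(of_nat n - of_nat k' :: complex) \<noteq> 0" using k by simp
  have nz2: "P n k' \<noteq> 0" using P_nz k by simp
  have e: "inverse (P n (Suc k')) * ((of_nat k' + 1) * (of_nat n - of_nat k')) = of_nat k * inverse (P n k')"
    using nz nz2 by (simp add: Suc P_Suc field_simps)
  have "DY (T r n Q k) = smul (inverse (P n (Suc k'))) (smul ((of_nat k' + 1) * (of_nat n - of_nat k')) (E r Q k'))"
    by (simp add: Suc T_def DY_smul E_Y[OF QH QY])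
  also have "\<dots> = smul (of_nat k) (T r n Q (k - 1))"
    by (simp only: smul_smul e) (simp add: Suc T_def smul_smul)
  finally show ?thesis .
qed

lemma T_H: "DH r (T r n Q k) = smul (of_nat n - 2 * of_nat k) (T r n Q k)"
  by (simp add: T_def DH_smul E_H[OF QH] smul_smul mult.commute)

end

lemma row_X: "(\<Sum>i\<le>r. Xop r u i * f i) = (\<Sum>i\<le>r. u i * (if i = 0 then 0 else (of_nat r - of_nat i + 1) * f (i-1)))"
proof (cases r)
  case 0 then show ?thesis by (simp add: Xop_def)
next
  case (Suc s)
  have "(\<Sum>i\<le>r. Xop r u i * f i) = (\<Sum>i\<le>s. Xop r u i * f i)"
    by (simp add: Suc Xop_def)
  also have "\<dots> = (\<Sum>i\<le>s. u (Suc i) * ((of_nat r - of_nat (Suc i) + 1) * f i))"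
    by (rule sum.cong) (auto simp: Suc Xop_def of_nat_diff)
  also have "\<dots> = (\<Sum>i\<le>r. u i * (if i = 0 then 0 else (of_nat r - of_nat i + 1) * f (i-1)))"
    by (simp add: Suc sum.atMost_Suc_shift del: sum.atMost_Suc)
  finally show ?thesis .
qed

lemma row_Y: "f (Suc r) = 0 \<Longrightarrow> (\<Sum>i\<le>r. Yop r u i * f i) = (\<Sum>i\<le>r. u i * ((of_nat i + 1) * f (i+1)))"
proof (cases r)
  case 0 then show "f (Suc r) = 0 \<Longrightarrow> ?thesis" by (simp add: Yop_def)
next
  case (Suc s)
  assume f: "f (Suc r) = 0"
  have "(\<Sum>i\<le>r. Yop r u i * f i) = (\<Sum>i\<le>s. Yop r u (Suc i) * f (Suc i))"
    by (simp add: Suc sum.atMost_Suc_shift Yop_def del: sum.atMost_Suc)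
  also have "\<dots> = (\<Sum>i\<le>s. u i * ((of_nat i + 1) * f (i+1)))"
    by (rule sum.cong) (auto simp: Suc Yop_def algebra_simps)
  also have "\<dots> = (\<Sum>i\<le>r. u i * ((of_nat i + 1) * f (i+1)))"
    using f by (simp add: Suc)
  finally show ?thesis .
qed

lemma form_swap: "form r M u v = (\<Sum>j\<le>r. v j * (\<Sum>i\<le>r. u i * M i j))"
  unfolding form_def sum_distrib_left
  by (subst sum.swap) (simp add: algebra_simps)

lemma dsum: "(\<Sum>i\<le>r. \<Sum>j\<le>r. f i j) + (\<Sum>i\<le>r. \<Sum>j\<le>r. g i j) = (\<Sum>i\<le>r. \<Sum>j\<le>r. f i j + g i j)"
  by (simp add: sum.distrib)

lemma form_dsum: "form r M u v = (\<Sum>i\<le>r. \<Sum>j\<le>r. u i * v j * M i j)"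
  unfolding form_def by (simp add: sum_distrib_left algebra_simps)

lemma form_X: "form r M (Xop r u) v + form r M u (Xop r v) = form r (DX r M) u v"
proof -
  have 1: "form r M (Xop r u) v = (\<Sum>i\<le>r. \<Sum>j\<le>r. u i * v j * (if i = 0 then 0 else (of_nat r - of_nat i + 1) * M (i-1) j))"
    unfolding form_def row_X
    by (rule sum.cong[OF refl]) (auto simp: sum_distrib_left algebra_simps)
  have 2: "form r M u (Xop r v) = (\<Sum>i\<le>r. \<Sum>j\<le>r. u i * v j * (if j = 0 then 0 else (of_nat r - of_nat j + 1) * M i (j-1)))"
    unfolding form_swap row_X
    by (subst sum.swap) (rule sum.cong[OF refl], auto simp: sum_distrib_left algebra_simps)
  show ?thesis unfolding 1 2 dsum form_dsum[of r "DX r M"]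
    by (rule sum.cong[OF refl], rule sum.cong[OF refl]) (simp add: DX_def algebra_simps)
qed

lemma form_Y: "suppm r M \<Longrightarrow> form r M (Yop r u) v + form r M u (Yop r v) = form r (DY M) u v"
proof -
  assume s: "suppm r M"
  have 1: "form r M (Yop r u) v = (\<Sum>i\<le>r. \<Sum>j\<le>r. u i * v j * ((of_nat i + 1) * M (i+1) j))"
    unfolding form_def
    by (subst row_Y) (use s in \<open>auto simp: suppm_def sum_distrib_left algebra_simps intro!: sum.cong\<close>)
  have 2: "form r M u (Yop r v) = (\<Sum>i\<le>r. \<Sum>j\<le>r. u i * v j * ((of_nat j + 1) * M i (j+1)))"
  proof -
    have z: "(\<Sum>i\<le>r. u i * M i (Suc r)) = 0" using s by (simp add: suppm_def)
    have "form r M u (Yop r v) = (\<Sum>j\<le>r. v j * ((of_nat j + 1) * (\<Sum>i\<le>r. u i * M i (j + 1))))"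
      unfolding form_swap by (rule row_Y[where f="\<lambda>j. \<Sum>i\<le>r. u i * M i j", OF z])
    also have "\<dots> = (\<Sum>j\<le>r. \<Sum>i\<le>r. u i * v j * ((of_nat j + 1) * M i (j+1)))"
      by (auto simp: sum_distrib_left algebra_simps intro!: sum.cong)
    also have "\<dots> = (\<Sum>i\<le>r. \<Sum>j\<le>r. u i * v j * ((of_nat j + 1) * M i (j+1)))"
      by (rule sum.swap)
    finally show ?thesis .
  qed
  show ?thesis unfolding 1 2 dsum form_dsum[of r "DY M"]
    by (rule sum.cong[OF refl], rule sum.cong[OF refl]) (simp add: DY_def algebra_simps)
qed

lemma form_H: "form r M (Hop r u) v + form r M u (Hop r v) = form r (DH r M) u v"
  unfolding form_dsum dsum
  by (rule sum.cong[OF refl], rule sum.cong[OF refl]) (simp add: Hop_def DH_def algebra_simps)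

lemma form_smul: "form r (smul c M) u v = c * form r M u v"
  unfolding form_def smul_def by (simp add: sum_distrib_left algebra_simps)

lemma form_lin1: "form r M (\<lambda>i. a * f i + b * g i + c * h i) v = a * form r M f v + b * form r M g v + c * form r M h v"
  unfolding form_dsum by (simp add: sum_distrib_left sum.distrib[symmetric] algebra_simps)
lemma form_lin2: "form r M u (\<lambda>i. a * f i + b * g i + c * h i) = a * form r M u f + b * form r M u g + c * form r M u h"
  unfolding form_dsum by (simp add: sum_distrib_left sum.distrib[symmetric] algebra_simps)
lemma form_vadd1: "form r M (vadd u u') v = form r M u v + form r M u' v"
  unfolding form_dsum vadd_def by (simp add: sum.distrib[symmetric] algebra_simps)
lemma form_vadd2: "form r M v (vadd u u') = form r M v u + form r M v u'"
  unfolding form_dsum vadd_def by (simp add: sum.distrib[symmetric] algebra_simps)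
lemma form_vscale1: "form r M (vscale c u) v = c * form r M u v"
  unfolding form_dsum vscale_def by (simp add: sum_distrib_left algebra_simps)
lemma form_vscale2: "form r M v (vscale c u) = c * form r M v u"
  unfolding form_dsum vscale_def by (simp add: sum_distrib_left algebra_simps)

lemma form_sym: "(\<forall>i j. M i j = M j i) \<Longrightarrow> form r M u v = form r M v u"
proof -
  assume h: "\<forall>i j. M i j = M j i"
  have "form r M u v = (\<Sum>j\<le>r. v j * (\<Sum>i\<le>r. u i * M j i))"
    unfolding form_swap using h by simp
  then show ?thesis by (simp add: form_def)
qed

lemma DX_sym: "(\<forall>i j. M i j = M j i) \<Longrightarrow> (\<forall>i j. DX r M i j = DX r M j i)"
  by (simp add: DX_def)

lemma E_sym: "(\<forall>i j. Q i j = Q j i) \<Longrightarrow> (\<forall>i j. E r Q k i j = E r Q k j i)"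
  by (induction k) (simp_all add: E_Suc DX_sym)

lemma T_sym: "(\<forall>i j. Q i j = Q j i) \<Longrightarrow> (\<forall>i j. T r n Q k i j = T r n Q k j i)"
  using E_sym[of Q r k] by (simp add: T_def smul_def)

lemma act_eq: "act r a b c u = (\<lambda>i. a * Hop r u i + b * Xop r u i + c * Yop r u i)"
  by (simp add: act_def fun_eq_iff)

context setting begin

lemma equi_comp: "k \<le> n \<Longrightarrow>
  form r (T r n Q k) (act r a b c u) v + form r (T r n Q k) u (act r a b c v) =
  a * (of_nat n - 2 * of_nat k) * form r (T r n Q k) u v
  + b * (of_nat n - of_nat k) * form r (T r n Q (Suc k)) u v
  + c * of_nat k * form r (T r n Q (k - 1)) u v"
proof -
  assume k: "k \<le> n"
  let ?M = "T r n Q k"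
  have "form r ?M (act r a b c u) v + form r ?M u (act r a b c v)
     = a * (form r ?M (Hop r u) v + form r ?M u (Hop r v))
     + b * (form r ?M (Xop r u) v + form r ?M u (Xop r v))
     + c * (form r ?M (Yop r u) v + form r ?M u (Yop r v))"
    unfolding act_eq form_lin1 form_lin2 by (simp add: algebra_simps)
  also have "\<dots> = a * form r (DH r ?M) u v + b * form r (DX r ?M) u v + c * form r (DY ?M) u v"
    by (simp only: form_H form_X form_Y[OF T_supp])
  also have "\<dots> = a * (of_nat n - 2 * of_nat k) * form r (T r n Q k) u v
  + b * (of_nat n - of_nat k) * form r (T r n Q (Suc k)) u v
  + c * of_nat k * form r (T r n Q (k - 1)) u v"
    by (simp add: T_H T_X[OF k] T_Y[OF k] form_smul)
  finally show ?thesis .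
qed

end

lemma bas_Sym: "bas r i \<in> Sym r"
  by (simp add: bas_def Sym_def)

lemma sumvec_Sym: "(\<lambda>l. \<Sum>i\<le>k. c i * bas r i l) \<in> Sym r"
  unfolding Sym_def by (auto intro!: sum.neutral simp: bas_def)

lemma vec_expand: "u \<in> Sym r \<Longrightarrow> (\<lambda>l. \<Sum>i\<le>r. u i * bas r i l) = u"
proof (rule ext)
  fix l assume u: "u \<in> Sym r"
  show "(\<Sum>i\<le>r. u i * bas r i l) = u l"
  proof (cases "l \<le> r")
    case True
    have "(\<Sum>i\<le>r. u i * bas r i l) = (\<Sum>i\<le>r. if i = l then u l else 0)"
      by (rule sum.cong) (auto simp: bas_def)
    then show ?thesis using True by simp
  next
    case False
    then show ?thesis using u by (auto simp: bas_def Sym_def intro!: sum.neutral)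
  qed
qed

lemma qb:
  assumes q: "bilinear_form_on r q" and "u \<in> Sym r" "u' \<in> Sym r" "v \<in> Sym r"
  shows "q (vadd u u') v = q u v + q u' v" "q (vscale c u) v = c * q u v"
        "q v (vadd u u') = q v u + q v u'" "q v (vscale c u) = c * q v u"
  using assms unfolding bilinear_form_on_def by blast+

lemma q_lin1:
  assumes q: "bilinear_form_on r q" and v: "v \<in> Sym r"
  shows "q (\<lambda>l. \<Sum>i\<le>k. c i * bas r i l) v = (\<Sum>i\<le>k. c i * q (bas r i) v)"
proof (induction k)
  case 0
  have "(\<lambda>l. \<Sum>i\<le>0. c i * bas r i l) = vscale (c 0) (bas r 0)" by (simp add: vscale_def)
  then show ?case using qb[OF q bas_Sym bas_Sym v] by simp
next
  case (Suc k)
  have "(\<lambda>l. \<Sum>i\<le>Suc k. c i * bas r i l) = vadd (\<lambda>l. \<Sum>i\<le>k. c i * bas r i l) (vscale (c (Suc k)) (bas r (Suc k)))"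
    by (simp add: vadd_def vscale_def)
  moreover have "vscale (c (Suc k)) (bas r (Suc k)) \<in> Sym r"
    by (simp add: vscale_def bas_def Sym_def)
  ultimately show ?case using qb[OF q sumvec_Sym _ v] Suc qb[OF q bas_Sym bas_Sym v] by simp
qed

lemma q_lin2:
  assumes q: "bilinear_form_on r q" and v: "v \<in> Sym r"
  shows "q v (\<lambda>l. \<Sum>i\<le>k. c i * bas r i l) = (\<Sum>i\<le>k. c i * q v (bas r i))"
proof (induction k)
  case 0
  have "(\<lambda>l. \<Sum>i\<le>0. c i * bas r i l) = vscale (c 0) (bas r 0)" by (simp add: vscale_def)
  then show ?case using qb[OF q bas_Sym bas_Sym v] by simp
next
  case (Suc k)
  have "(\<lambda>l. \<Sum>i\<le>Suc k. c i * bas r i l) = vadd (\<lambda>l. \<Sum>i\<le>k. c i * bas r i l) (vscale (c (Suc k)) (bas r (Suc k)))"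
    by (simp add: vadd_def vscale_def)
  moreover have "vscale (c (Suc k)) (bas r (Suc k)) \<in> Sym r"
    by (simp add: vscale_def bas_def Sym_def)
  ultimately show ?case using qb[OF q sumvec_Sym _ v] Suc qb[OF q bas_Sym bas_Sym v] by simp
qed

lemma q_form:
  assumes q: "bilinear_form_on r q" and u: "u \<in> Sym r" and v: "v \<in> Sym r"
  shows "q u v = form r (\<lambda>i j. q (bas r i) (bas r j)) u v"
proof -
  have "q u v = q (\<lambda>l. \<Sum>i\<le>r. u i * bas r i l) v" using vec_expand[OF u] by simp
  also have "\<dots> = (\<Sum>i\<le>r. u i * q (bas r i) v)" by (rule q_lin1[OF q v])
  also have "\<dots> = (\<Sum>i\<le>r. u i * q (bas r i) (\<lambda>l. \<Sum>j\<le>r. v j * bas r j l))"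
    using vec_expand[OF v] by simp
  also have "\<dots> = form r (\<lambda>i j. q (bas r i) (bas r j)) u v"
    unfolding form_def using q_lin2[OF q bas_Sym] by simp
  finally show ?thesis .
qed

lemma q_zero:
  assumes q: "bilinear_form_on r q" and v: "v \<in> Sym r"
  shows "q (\<lambda>l. 0) v = 0" "q v (\<lambda>l. 0) = 0"
proof -
  have z: "(\<lambda>l. 0::complex) \<in> Sym r" by (simp add: Sym_def)
  have e: "vscale 0 (\<lambda>l. 0) = (\<lambda>l. 0)" by (simp add: vscale_def)
  show "q (\<lambda>l. 0) v = 0" using qb(2)[OF q z z v, of 0] e by simp
  show "q v (\<lambda>l. 0) = 0" using qb(4)[OF q z z v, of 0] e by simp
qed

lemma bas_out: "i > r \<Longrightarrow> bas r i = (\<lambda>l. 0)"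
  by (simp add: bas_def fun_eq_iff)

lemma vadd_app: "vadd f g k = f k + g k" by (simp add: vadd_def)
lemma vscale_app: "vscale c f k = c * f k" by (simp add: vscale_def)

lemma Xop_Sym: "Xop r u \<in> Sym r"
  by (simp add: Xop_def Sym_def)

theorem mainTheorem1:
  fixes r m n :: nat and q :: "vec \<Rightarrow> vec \<Rightarrow> complex"
  assumes "r \<ge> 2" and "2 * m \<le> r" and "n = 2 * r - 4 * m"
    and "bilinear_form_on r q"
    and "\<forall>i\<le>r. \<forall>j\<le>r. 0 = of_nat (i + 1) * q (bas r (i + 1)) (bas r j)
                          + of_nat (j + 1) * q (bas r i) (bas r (j + 1))"
    and "\<forall>i\<le>r. \<forall>j\<le>r.
           of_int (2 * int r - 2 * int i - 2 * int j - int n) * q (bas r i) (bas r j) = 0"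
  shows "\<exists>B. bilinear_map_on r n B \<and> equivariant r n B \<and>
              (\<forall>u\<in>Sym r. \<forall>v\<in>Sym r. B u v 0 = q u v) \<and>
              (\<forall>B'. bilinear_map_on r n B' \<and> equivariant r n B' \<and>
                    (\<forall>u\<in>Sym r. \<forall>v\<in>Sym r. B' u v 0 = q u v) \<longrightarrow>
                    (\<forall>u\<in>Sym r. \<forall>v\<in>Sym r. B' u v = B u v)) \<and>
              (symmetric_on r B \<longleftrightarrow> symmetric_on r q)"
proof -
  define Q where "Q = (\<lambda>i j. q (bas r i) (bas r j))"
  have qf: "\<And>u v. u \<in> Sym r \<Longrightarrow> v \<in> Sym r \<Longrightarrow> q u v = form r Q u v"
    using q_form[OF assms(4)] Q_def by simp
  have Qs: "suppm r Q"
    unfolding suppm_def Q_def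
    using q_zero[OF assms(4) bas_Sym] bas_out by auto
  have Q0: "r < i \<or> r < j \<Longrightarrow> Q i j = 0" for i j using Qs unfolding suppm_def by blast
  have QY: "DY Q = (\<lambda>i j. 0)"
  proof (intro ext)
    fix i j
    show "DY Q i j = 0"
    proof (cases "i \<le> r \<and> j \<le> r")
      case True
      then show ?thesis using assms(5) unfolding DY_def Q_def by (simp add: add.commute)
    next
      case False
      then show ?thesis using Q0[of "i+1" j] Q0[of i "j+1"] by (auto simp: DY_def)
    qed
  qed
  have QH: "DH r Q = smul (of_nat n) Q"
  proof (intro ext)
    fix i j
    show "DH r Q i j = smul (of_nat n) Q i j"
    proof (cases "i \<le> r \<and> j \<le> r")
      case True
      then have h: "(2 * of_nat r - 2 * of_nat i - 2 * of_nat j - of_nat n) * Q i j = (0::complex)"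
        using assms(6) unfolding Q_def by simp
      then show ?thesis unfolding DH_def smul_def by (simp add: algebra_simps)
    next
      case False
      then show ?thesis using Q0[of i j] by (auto simp: DH_def smul_def)
    qed
  qed
  interpret setting r n Q using QH QY Qs by unfold_locales
  define B where "B = (\<lambda>u v k. if k \<le> n then form r (T r n Q k) u v else 0)"
  have B0: "u \<in> Sym r \<Longrightarrow> v \<in> Sym r \<Longrightarrow> B u v 0 = q u v" for u v
    by (simp add: B_def T_0 qf)
  have bil: "bilinear_map_on r n B"
    unfolding bilinear_map_on_def
    by (auto simp: B_def Sym_def vadd_app vscale_app fun_eq_iff form_vadd1 form_vadd2
        form_vscale1 form_vscale2)
  have equi: "equivariant r n B"
    unfolding equivariant_def
  proof (intro allI ballI ext)
    fix a b c u v k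
    show "vadd (B (act r a b c u) v) (B u (act r a b c v)) k = act n a b c (B u v) k"
    proof (cases "k \<le> n")
      case False
      then show ?thesis by (simp add: B_def vadd_def act_def Hop_def Xop_def Yop_def)
    next
      case True
      have l: "vadd (B (act r a b c u) v) (B u (act r a b c v)) k =
        a * (of_nat n - 2 * of_nat k) * form r (T r n Q k) u v
        + b * (of_nat n - of_nat k) * form r (T r n Q (Suc k)) u v
        + c * of_nat k * form r (T r n Q (k - 1)) u v"
        using True equi_comp[OF True] by (simp add: B_def vadd_def)
      have h: "Hop n (B u v) k = (of_nat n - 2 * of_nat k) * form r (T r n Q k) u v"
        using True by (simp add: Hop_def B_def)
      have x: "Xop n (B u v) k = (of_nat n - of_nat k) * form r (T r n Q (Suc k)) u v"
        using True by (cases "k = n") (auto simp: Xop_def B_def of_nat_diff)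
      have y: "Yop n (B u v) k = of_nat k * form r (T r n Q (k - 1)) u v"
        using True by (cases k) (simp_all add: Yop_def B_def)
      show ?thesis unfolding l by (simp add: act_def h x y algebra_simps)
    qed
  qed
  have uniq: "\<forall>u\<in>Sym r. \<forall>v\<in>Sym r. B' u v = B u v"
    if b1: "bilinear_map_on r n B'" and b2: "equivariant r n B'"
      and b3: "\<forall>u\<in>Sym r. \<forall>v\<in>Sym r. B' u v 0 = q u v" for B'
  proof -
    have main: "k \<le> n \<longrightarrow> (\<forall>u\<in>Sym r. \<forall>v\<in>Sym r. B' u v k = form r (T r n Q k) u v)" for k
    proof (induction k)
      case 0 then show ?case using b3 qf by (simp add: T_0)
    next
      case (Suc k)
      show ?case
      proof (intro impI ballI)
        fix u v assume k: "Suc k \<le> n" and u: "u \<in> Sym r" and v: "v \<in> Sym r"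
        have ax: "act d 0 1 0 w = Xop d w" for d w by (simp add: act_def fun_eq_iff)
        have "vadd (B' (act r 0 1 0 u) v) (B' u (act r 0 1 0 v)) k = act n 0 1 0 (B' u v) k"
          using b2 u v unfolding equivariant_def by metis
        then have "B' (Xop r u) v k + B' u (Xop r v) k = of_nat (n - k) * B' u v (Suc k)"
          using k by (simp add: ax vadd_def Xop_def)
        moreover have "B' (Xop r u) v k + B' u (Xop r v) k = (of_nat n - of_nat k) * form r (T r n Q (Suc k)) u v"
          using Suc k u v Xop_Sym form_X[of r "T r n Q k" u v] T_X[of k] form_smul by simp
        moreover have "(of_nat n - of_nat k :: complex) \<noteq> 0" using k by simp
        moreover have "(of_nat (n - k) :: complex) = of_nat n - of_nat k" using k by (simp add: of_nat_diff)
        ultimately show "B' u v (Suc k) = form r (T r n Q (Suc k)) u v" by simp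
      qed
    qed
    show ?thesis
    proof (intro ballI ext)
      fix u v k assume u: "u \<in> Sym r" and v: "v \<in> Sym r"
      show "B' u v k = B u v k"
      proof (cases "k \<le> n")
        case True then show ?thesis using main u v by (simp add: B_def)
      next
        case False
        have "B' u v \<in> Sym n" using b1 u v unfolding bilinear_map_on_def by blast
        then show ?thesis using False by (simp add: Sym_def B_def)
      qed
    qed
  qed
  have sym: "symmetric_on r B \<longleftrightarrow> symmetric_on r q"
  proof
    assume "symmetric_on r B"
    then show "symmetric_on r q" unfolding symmetric_on_def using B0 by metis
  next
    assume s: "symmetric_on r q"
    have "\<forall>i j. Q i j = Q j i" using s bas_Sym unfolding symmetric_on_def Q_def by blast
    then have "\<forall>i j. T r n Q k i j = T r n Q k j i" for k using T_sym by blast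
    then show "symmetric_on r B" unfolding symmetric_on_def B_def
      using form_sym by (simp add: fun_eq_iff)
  qed
  show ?thesis using bil equi B0 uniq sym by blast
qed

end
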